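(* Let $T_1$ and $T_2$ be subtrees of a tree $T$ such that $T=T_1\cup T_2$. Then $\operatorname{pw}(T)+1\le (\operatorname{pw}(T_1)+1)+(\operatorname{pw}(T_2)+1)$.
   Context: $\operatorname{pw}$ denotes pathwidth: the minimum, over all path decompositions (sequences of vertex subsets such that each edge lies in some set and each vertex lies in a non-empty consecutive run of sets), of the maximum set size minus 1. A subtree is a connected subgraph of $T$. *)

theory Defs
  imports Main
begin

definition graph :: "'a set \<Rightarrow> 'a set set \<Rightarrow> bool" where
  "graph V E \<longleftrightarrow> finite V \<and> (\<forall>e\<in>E. e \<subseteq> V \<and> card e = 2)"

definition walk :: "'a set \<Rightarrow> 'a set set \<Rightarrow> 'a list \<Rightarrow> bool" where
  "walk V E xs \<longleftrightarrow> xs \<noteq> [] \<and> set xs \<subseteq> V \<and>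
     (\<forall>i. Suc i < length xs \<longrightarrow> {xs ! i, xs ! Suc i} \<in> E)"

definition connected_graph :: "'a set \<Rightarrow> 'a set set \<Rightarrow> bool" where
  "connected_graph V E \<longleftrightarrow> graph V E \<and> V \<noteq> {} \<and>
     (\<forall>u\<in>V. \<forall>v\<in>V. \<exists>xs. walk V E xs \<and> hd xs = u \<and> last xs = v)"

definition is_cycle :: "'a set \<Rightarrow> 'a set set \<Rightarrow> 'a list \<Rightarrow> bool" where
  "is_cycle V E xs \<longleftrightarrow> walk V E xs \<and> distinct xs \<and> length xs \<ge> 3 \<and>
     {last xs, hd xs} \<in> E"

definition tree :: "'a set \<Rightarrow> 'a set set \<Rightarrow> bool" where
  "tree V E \<longleftrightarrow> connected_graph V E \<and> \<not> (\<exists>xs. is_cycle V E xs)"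

definition subgraph :: "'a set \<Rightarrow> 'a set set \<Rightarrow> 'a set \<Rightarrow> 'a set set \<Rightarrow> bool" where
  "subgraph V' E' V E \<longleftrightarrow> graph V' E' \<and> V' \<subseteq> V \<and> E' \<subseteq> E"

definition subtree :: "'a set \<Rightarrow> 'a set set \<Rightarrow> 'a set \<Rightarrow> 'a set set \<Rightarrow> bool" where
  "subtree V' E' V E \<longleftrightarrow> subgraph V' E' V E \<and> connected_graph V' E'"

definition path_decomp :: "'a set \<Rightarrow> 'a set set \<Rightarrow> 'a set list \<Rightarrow> bool" where
  "path_decomp V E bs \<longleftrightarrow>
     (\<forall>B\<in>set bs. B \<subseteq> V) \<and>
     (\<forall>e\<in>E. \<exists>B\<in>set bs. e \<subseteq> B) \<and>
     (\<forall>v\<in>V. (\<exists>B\<in>set bs. v \<in> B) \<and>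
        (\<forall>i j k. i \<le> j \<longrightarrow> j \<le> k \<longrightarrow> k < length bs \<longrightarrow>
           v \<in> bs ! i \<longrightarrow> v \<in> bs ! k \<longrightarrow> v \<in> bs ! j))"

definition pathwidth :: "'a set \<Rightarrow> 'a set set \<Rightarrow> nat" where
  "pathwidth V E = (LEAST k. \<exists>bs. path_decomp V E bs \<and> (\<forall>B\<in>set bs. card B \<le> k + 1))"

end

theory Submission
  imports Defs
begin

lemma walk_single[simp]: "walk V E [x] \<longleftrightarrow> x \<in> V" by (simp add: walk_def)

lemma walk_Cons2: "walk V E (x # y # ys) \<longleftrightarrow> x \<in> V \<and> {x,y} \<in> E \<and> walk V E (y # ys)"
proof
  assume w: "walk V E (x # y # ys)"
  show "x \<in> V \<and> {x,y} \<in> E \<and> walk V E (y # ys)"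
  proof (intro conjI)
    show "x \<in> V" using w by (simp add: walk_def)
    have "Suc 0 < length (x # y # ys)" by simp
    hence "{(x # y # ys) ! 0, (x # y # ys) ! Suc 0} \<in> E" using w unfolding walk_def by blast
    thus "{x,y} \<in> E" by simp
    show "walk V E (y # ys)" unfolding walk_def
    proof (intro conjI allI impI)
      fix i assume "Suc i < length (y # ys)"
      hence "Suc (Suc i) < length (x # y # ys)" by simp
      hence "{(x # y # ys) ! Suc i, (x # y # ys) ! Suc (Suc i)} \<in> E" using w unfolding walk_def by blast
      thus "{(y # ys) ! i, (y # ys) ! Suc i} \<in> E" by simp
    next
      show "y # ys \<noteq> []" by simp
      show "set (y # ys) \<subseteq> V" using w by (simp add: walk_def)
    qed
  qed
next
  assume h: "x \<in> V \<and> {x,y} \<in> E \<and> walk V E (y # ys)"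
  show "walk V E (x # y # ys)" unfolding walk_def
  proof (intro conjI allI impI)
    fix i assume i: "Suc i < length (x # y # ys)"
    show "{(x # y # ys) ! i, (x # y # ys) ! Suc i} \<in> E"
    proof (cases i)
      case 0 thus ?thesis using h by simp
    next
      case (Suc j)
      hence "Suc j < length (y # ys)" using i by simp
      hence "{(y # ys) ! j, (y # ys) ! Suc j} \<in> E" using h unfolding walk_def by blast
      thus ?thesis using Suc by simp
    qed
  next
    show "x # y # ys \<noteq> []" by simp
    show "set (x # y # ys) \<subseteq> V" using h by (simp add: walk_def)
  qed
qed

lemma walk_nonempty: "walk V E xs \<Longrightarrow> xs \<noteq> []" by (simp add: walk_def)

lemma walk_append:
  "xs \<noteq> [] \<Longrightarrow> ys \<noteq> [] \<Longrightarrow> walk V E (xs @ ys) \<longleftrightarrow> walk V E xs \<and> walk V E ys \<and> {last xs, hd ys} \<in> E"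
proof (induction xs)
  case Nil thus ?case by simp
next
  case (Cons x xs)
  show ?case
  proof (cases xs)
    case Nil
    obtain y ys' where ys: "ys = y # ys'" using Cons.prems by (cases ys) auto
    show ?thesis unfolding Nil ys by (simp only: append.simps walk_Cons2 walk_single) auto
  next
    case (Cons z zs)
    have IH: "walk V E (xs @ ys) \<longleftrightarrow> walk V E xs \<and> walk V E ys \<and> {last xs, hd ys} \<in> E"
      using Cons.IH Cons.prems Cons by simp
    have "walk V E ((x # xs) @ ys) \<longleftrightarrow> x \<in> V \<and> {x,z} \<in> E \<and> walk V E (xs @ ys)"
      unfolding Cons by (simp only: append.simps walk_Cons2)
    moreover have "walk V E (x # xs) \<longleftrightarrow> x \<in> V \<and> {x,z} \<in> E \<and> walk V E xs"
      unfolding Cons by (simp only: walk_Cons2)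
    moreover have "last (x # xs) = last xs" using Cons by simp
    ultimately show ?thesis using IH by (simp only:) blast
  qed
qed

lemma walk_join:
  assumes a: "walk V E xs" "walk V E ys" "last xs = hd ys"
  shows "walk V E (xs @ tl ys)"
proof (cases "tl ys")
  case Nil thus ?thesis using a by simp
next
  case (Cons z zs)
  have ys: "ys = hd ys # z # zs" using Cons a(2) walk_nonempty by (metis list.collapse)
  have "{hd ys, z} \<in> E" "walk V E (z # zs)" using a(2) ys walk_Cons2 by metis+
  thus ?thesis using a Cons walk_nonempty walk_append by (metis list.sel(1) neq_Nil_conv)
qed

lemma walk_rev: "walk V E xs \<Longrightarrow> walk V E (rev xs)"
proof (induction xs)
  case Nil thus ?case by (simp add: walk_def)
next
  case (Cons x xs)
  show ?case
  proof (cases xs)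
    case Nil thus ?thesis using Cons by simp
  next
    case (Cons z zs)
    have "x \<in> V" "{x,z} \<in> E" "walk V E xs" using Cons.prems Cons walk_Cons2 by metis+
    moreover have "last (rev xs) = z" using Cons by (simp add: last_rev)
    ultimately show ?thesis using Cons.IH walk_append[of "rev xs" "[x]"] Cons
      by (simp add: insert_commute)
  qed
qed

lemma walk_mono: "walk V E xs \<Longrightarrow> V \<subseteq> V' \<Longrightarrow> E \<subseteq> E' \<Longrightarrow> walk V' E' xs"
  by (auto simp: walk_def)

lemma walk_restrict: "walk V E xs \<Longrightarrow> walk V {e\<in>E. e \<subseteq> set xs} xs"
  unfolding walk_def by (auto simp: nth_mem)

lemma walk_butlast: "walk V E xs \<Longrightarrow> length xs \<ge> 2 \<Longrightarrow> walk V E (butlast xs)"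
proof -
  assume a: "walk V E xs" "length xs \<ge> 2"
  have "xs = butlast xs @ [last xs]" using a by (metis append_butlast_last_id list.size(3) not_numeral_le_zero)
  moreover have "butlast xs \<noteq> []" using a by (cases xs) auto
  ultimately show ?thesis using a walk_append by (metis not_Cons_self2)
qed

lemma walk_distinct:
  "walk V E xs \<Longrightarrow> \<exists>ys. walk V E ys \<and> distinct ys \<and> hd ys = hd xs \<and> last ys = last xs"
proof (induction "length xs" arbitrary: xs rule: less_induct)
  case less
  show ?case
  proof (cases "distinct xs")
    case True thus ?thesis using less by blast
  next
    case False
    then obtain as y bs cs where xs: "xs = as @ [y] @ bs @ [y] @ cs" using not_distinct_decomp by blast
    define zs where "zs = as @ [y] @ cs"
    have "walk V E zs"
    proof -
      have w: "walk V E ((as @ [y] @ bs) @ ([y] @ cs))" using less.prems xs by simp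
      hence w2: "walk V E ([y] @ cs)" using walk_append by (metis append_is_Nil_conv not_Cons_self2)
      have w1: "walk V E (as @ [y] @ bs)" using w walk_append by (metis append_is_Nil_conv not_Cons_self2)
      show ?thesis
      proof (cases "as = []")
        case True thus ?thesis using w2 zs_def by simp
      next
        case False
        have "walk V E as" "{last as, y} \<in> E" using w1 False walk_append[of as "[y] @ bs"] by auto
        thus ?thesis using w2 False walk_append[of as "[y] @ cs"] zs_def by auto
      qed
    qed
    moreover have "length zs < length xs" using xs zs_def by simp
    moreover have "hd zs = hd xs" using xs zs_def by (cases as) auto
    moreover have "last zs = last xs" using xs zs_def by (cases cs) auto
    ultimately show ?thesis using less.hyps by metis
  qed
qed

lemma tree_no_bypass:
  assumes t: "tree V E" and e: "{u,v} \<in> E" and uv: "u \<noteq> v"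
    and w: "walk V (E - {{u,v}}) xs" and h: "hd xs = u" and l: "last xs = v"
  shows False
proof -
  obtain ys where y: "walk V (E - {{u,v}}) ys" "distinct ys" "hd ys = u" "last ys = v"
    using walk_distinct[OF w] h l by blast
  have ne: "ys \<noteq> []" using y(1) walk_nonempty by blast
  then obtain a ys' where ys: "ys = a # ys'" by (cases ys) auto
  show False
  proof (cases ys')
    case Nil thus False using y uv ys by simp
  next
    case (Cons b zs)
    show False
    proof (cases zs)
      case Nil
      have "{a,b} \<in> E - {{u,v}}" using y(1) ys Cons Nil by (simp add: walk_Cons2)
      moreover have "a = u" "b = v" using ys Cons Nil y by auto
      ultimately show False by simp
    next
      case (Cons c ws)
      have len: "length ys \<ge> 3" using ys \<open>ys' = b # zs\<close> Cons by simp
      have w2: "walk V E ys" using walk_mono[OF y(1) order_refl Diff_subset] .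
      have "{last ys, hd ys} \<in> E" using y e by (simp add: insert_commute)
      hence "is_cycle V E ys" unfolding is_cycle_def using len w2 y(2) by blast
      thus False using t unfolding tree_def by blast
    qed
  qed
qed

lemma card2_E: "graph V E \<Longrightarrow> e \<in> E \<Longrightarrow> \<exists>u v. e = {u,v} \<and> u \<noteq> v \<and> u \<in> V \<and> v \<in> V"
proof -
  assume "graph V E" "e \<in> E"
  hence "e \<subseteq> V" "card e = 2" unfolding graph_def by blast+
  then obtain u v where "e = {u,v}" "u \<noteq> v" by (auto simp: card_2_iff)
  thus ?thesis using \<open>e \<subseteq> V\<close> by blast
qed

lemma tree_edge_in:
  assumes t: "tree V E" and c: "connected_graph V1 E1" and s: "V1 \<subseteq> V" "E1 \<subseteq> E"
    and e: "e \<in> E" "e \<subseteq> V1"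
  shows "e \<in> E1"
proof (rule ccontr)
  assume n: "e \<notin> E1"
  have g: "graph V E" using t by (simp add: tree_def connected_graph_def)
  obtain u v where uv: "e = {u,v}" "u \<noteq> v" using card2_E[OF g e(1)] by blast
  obtain xs where xs: "walk V1 E1 xs" "hd xs = u" "last xs = v"
    using c e(2) uv unfolding connected_graph_def by blast
  have "E1 \<subseteq> E - {{u,v}}" using s n uv by blast
  hence "walk V (E - {{u,v}}) xs" using walk_mono[OF xs(1) s(1)] by blast
  thus False using tree_no_bypass[OF t _ uv(2)] xs e uv by blast
qed

lemma last_join: "xs \<noteq> [] \<Longrightarrow> ys \<noteq> [] \<Longrightarrow> last xs = hd ys \<Longrightarrow> last (xs @ tl ys) = last ys"
  by (cases ys) auto

lemma hd_join: "xs \<noteq> [] \<Longrightarrow> hd (xs @ tl ys) = hd xs" by simp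

lemma set_butlast_last: "xs \<noteq> [] \<Longrightarrow> set xs = insert (last xs) (set (butlast xs))"
  by (induction xs) auto

lemma graph_edge_sub: "graph V E \<Longrightarrow> e \<in> E \<Longrightarrow> e \<subseteq> V" by (simp add: graph_def)

lemma attach_unique:
  assumes t: "tree V E" and c: "connected_graph V1 E1" and s: "V1 \<subseteq> V" "E1 \<subseteq> E"
    and r: "r \<in> V - V1"
    and A1: "walk V E xs" "hd xs = r" "last xs = a" "a \<in> V1" "set (butlast xs) \<subseteq> V - V1"
    and A2: "walk V E ys" "hd ys = r" "last ys = b" "b \<in> V1" "set (butlast ys) \<subseteq> V - V1"
  shows "a = b"
proof (rule ccontr)
  assume ab: "a \<noteq> b"
  have xne: "xs \<noteq> []" "ys \<noteq> []" using A1(1) A2(1) walk_nonempty by blast+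
  have "length ys \<ge> 2"
  proof (rule ccontr)
    assume "\<not> length ys \<ge> 2"
    then obtain z where "ys = [z]" using xne(2) by (cases ys; cases "tl ys") auto
    thus False using A2 r by simp
  qed
  hence bne: "butlast ys \<noteq> []" by (cases ys) auto
  define x where "x = last (butlast ys)"
  have "x \<in> set (butlast ys)" using bne x_def by simp
  hence xR: "x \<in> V - V1" using A2(5) by blast
  have ysd: "ys = butlast ys @ [b]" using append_butlast_last_id[OF xne(2)] A2(3) by simp
  have "walk V E (butlast ys @ [b])" using A2(1) ysd by metis
  hence "{x, b} \<in> E" using walk_append[OF bne, of "[b]" V E] x_def by simp
  hence eE: "{b, x} \<in> E" by (simp add: insert_commute)
  have bx: "b \<noteq> x" using xR A2(4) by blast
  have g1: "graph V1 E1" using c by (simp add: connected_graph_def)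
  obtain p1 where p1: "walk V1 E1 p1" "hd p1 = b" "last p1 = a"
    using c A1(4) A2(4) unfolding connected_graph_def by blast
  define F where "F = E1 \<union> {e\<in>E. e \<subseteq> set xs} \<union> {e\<in>E. e \<subseteq> set (butlast ys)}"
  have FE: "F \<subseteq> E - {{b,x}}"
  proof -
    have "{b,x} \<notin> E1" using graph_edge_sub[OF g1] xR by blast
    moreover have "\<not> {b,x} \<subseteq> set xs" using set_butlast_last[OF xne(1)] A1 A2(4) ab by auto
    moreover have "\<not> {b,x} \<subseteq> set (butlast ys)" using A2(4,5) by auto
    ultimately have nots: "{b,x} \<notin> E1" "\<not> {b,x} \<subseteq> set xs" "\<not> {b,x} \<subseteq> set (butlast ys)" by blast+
    show ?thesis
    proof
      fix e assume "e \<in> F"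
      hence "e \<in> E1 \<or> (e \<in> E \<and> e \<subseteq> set xs) \<or> (e \<in> E \<and> e \<subseteq> set (butlast ys))" unfolding F_def by blast
      thus "e \<in> E - {{b,x}}" using nots s(2) by (elim disjE) auto
    qed
  qed
  have "E1 \<subseteq> F" unfolding F_def by blast
  hence w1: "walk V F p1" using walk_mono[OF p1(1) s(1)] by blast
  have w2': "walk V {e\<in>E. e \<subseteq> set xs} (rev xs)" using walk_rev[OF walk_restrict[OF A1(1)]] .
  have "{e\<in>E. e \<subseteq> set xs} \<subseteq> F" unfolding F_def by blast
  hence w2: "walk V F (rev xs)" using walk_mono[OF w2' order_refl] by blast
  have w3': "walk V E (butlast ys)" using walk_butlast[OF A2(1) \<open>length ys \<ge> 2\<close>] .
  have w3'': "walk V {e\<in>E. e \<subseteq> set (butlast ys)} (butlast ys)" using walk_restrict[OF w3'] .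
  have "{e\<in>E. e \<subseteq> set (butlast ys)} \<subseteq> F" unfolding F_def by blast
  hence w3: "walk V F (butlast ys)" using walk_mono[OF w3'' order_refl] by blast
  have hb: "hd (butlast ys) = r" using hd_append2[OF bne, of "[b]"] ysd A2(2) by metis
  have p1ne: "p1 \<noteq> []" using p1(1) walk_nonempty by blast
  have rne: "rev xs \<noteq> []" using xne by simp
  have j1: "walk V F (p1 @ tl (rev xs))" using walk_join[OF w1 w2] p1 A1 by (simp add: hd_rev)
  have l1: "last (p1 @ tl (rev xs)) = r" using last_join[OF p1ne rne] p1 A1 by (simp add: hd_rev last_rev)
  have j2: "walk V F ((p1 @ tl (rev xs)) @ tl (butlast ys))"
    using walk_join[OF j1 w3] l1 hb by simp
  have l2: "last ((p1 @ tl (rev xs)) @ tl (butlast ys)) = x"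
    using last_join[OF _ bne, of "p1 @ tl (rev xs)"] l1 hb x_def p1ne by simp
  have h2: "hd ((p1 @ tl (rev xs)) @ tl (butlast ys)) = b" using p1 p1ne by simp
  have "walk V (E - {{b,x}}) ((p1 @ tl (rev xs)) @ tl (butlast ys))"
    using walk_mono[OF j2 order_refl FE] .
  thus False using tree_no_bypass[OF t eE bx] l2 h2 by blast
qed

lemma attach_walk_exists:
  assumes s: "V1 \<subseteq> V"
  shows "walk V E xs \<Longrightarrow> last xs \<in> V1 \<Longrightarrow>
    \<exists>a ys. walk V E ys \<and> hd ys = hd xs \<and> last ys = a \<and> a \<in> V1 \<and> set (butlast ys) \<subseteq> V - V1"
proof (induction xs)
  case Nil thus ?case by (simp add: walk_def)
next
  case (Cons x xs)
  show ?case
  proof (cases "x \<in> V1")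
    case True
    hence "walk V E [x]" using s by auto
    thus ?thesis using True by (intro exI[of _ x] exI[of _ "[x]"]) simp
  next
    case False
    have xsne: "xs \<noteq> []" using Cons.prems False by auto
    then obtain z zs where xs: "xs = z # zs" by (cases xs) auto
    have xV: "x \<in> V" and ed: "{x,z} \<in> E" and wx: "walk V E xs"
      using Cons.prems(1) xs walk_Cons2 by metis+
    have "last xs \<in> V1" using Cons.prems(2) xsne by simp
    then obtain a ys where ys: "walk V E ys" "hd ys = hd xs" "last ys = a" "a \<in> V1"
      "set (butlast ys) \<subseteq> V - V1" using Cons.IH wx by blast
    have yne: "ys \<noteq> []" using ys(1) walk_nonempty by blast
    then obtain y ys' where ysd: "ys = y # ys'" by (cases ys) auto
    have "y = z" using ys(2) ysd xs by simp
    have "walk V E (x # ys)" using ysd ys(1) xV ed \<open>y = z\<close> walk_Cons2 by metis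
    moreover have "set (butlast (x # ys)) \<subseteq> V - V1" using ys(5) yne xV False by auto
    moreover have "last (x # ys) = a" using yne ys(3) by simp
    ultimately show ?thesis using ys(4) by (intro exI[of _ a] exI[of _ "x # ys"]) simp
  qed
qed

lemma attach_exists:
  assumes t: "tree V E" and c: "connected_graph V1 E1" and s: "V1 \<subseteq> V" "E1 \<subseteq> E"
  shows "\<exists>att. (\<forall>r\<in>V-V1. att r \<in> V1) \<and>
    (\<forall>r y. {r,y} \<in> E \<longrightarrow> r \<in> V - V1 \<longrightarrow> y \<in> V1 \<longrightarrow> att r = y) \<and>
    (\<forall>r y. {r,y} \<in> E \<longrightarrow> r \<in> V - V1 \<longrightarrow> y \<in> V - V1 \<longrightarrow> att r = att y)"
proof -
  define AW where "AW r a \<longleftrightarrow> (\<exists>ys. walk V E ys \<and> hd ys = r \<and> last ys = a \<and> a \<in> V1 \<and> set (butlast ys) \<subseteq> V - V1)" for r a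
  have ex: "\<exists>a. AW r a" if r: "r \<in> V" for r
  proof -
    obtain v where v: "v \<in> V1" using c by (auto simp: connected_graph_def)
    obtain xs where xs: "walk V E xs" "hd xs = r" "last xs = v"
      using t r v s unfolding tree_def connected_graph_def by blast
    show ?thesis using attach_walk_exists[OF s(1) xs(1)] xs v unfolding AW_def by auto
  qed
  have un: "a = b" if "r \<in> V - V1" "AW r a" "AW r b" for r a b
    using that attach_unique[OF t c s] unfolding AW_def by metis
  define att where "att r = (SOME a. AW r a)" for r
  have att: "AW r (att r)" if "r \<in> V" for r unfolding att_def using ex[OF that] by (rule someI_ex)
  have g: "graph V E" using t by (simp add: tree_def connected_graph_def)
  show ?thesis
  proof (intro exI[of _ att] conjI allI impI ballI)
    fix r assume "r \<in> V - V1" thus "att r \<in> V1" using att unfolding AW_def by blast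
  next
    fix r y assume e: "{r,y} \<in> E" and r: "r \<in> V - V1" and y: "y \<in> V1"
    have yV: "y \<in> V" using y s by blast
    have "walk V E [r,y]" using e r yV by (simp add: walk_Cons2)
    hence "AW r y" unfolding AW_def using r y by (intro exI[of _ "[r,y]"]) simp
    thus "att r = y" using un[OF r att] r by blast
  next
    fix r y assume e: "{r,y} \<in> E" and r: "r \<in> V - V1" and y: "y \<in> V - V1"
    obtain ys where ys: "walk V E ys" "hd ys = y" "last ys = att y" "att y \<in> V1" "set (butlast ys) \<subseteq> V - V1"
      using att[of y] y unfolding AW_def by blast
    have yne: "ys \<noteq> []" using ys(1) walk_nonempty by blast
    then obtain ys' where ysd: "ys = y # ys'" using ys(2) by (cases ys) auto
    have "walk V E (r # ys)" using ysd ys(1) r e walk_Cons2 by (metis DiffD1)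
    moreover have "set (butlast (r # ys)) \<subseteq> V - V1" using ys(5) yne r by auto
    ultimately have "AW r (att y)" unfolding AW_def using ys yne by (intro exI[of _ "r # ys"]) simp
    thus "att r = att y" using un[OF r att] r by blast
  qed
qed

lemma pd_parts:
  assumes "path_decomp V E bs"
  shows "\<forall>B\<in>set bs. B \<subseteq> V" "\<forall>e\<in>E. \<exists>B\<in>set bs. e \<subseteq> B"
    "\<forall>v\<in>V. (\<exists>B\<in>set bs. v \<in> B) \<and>
        (\<forall>i j k. i \<le> j \<longrightarrow> j \<le> k \<longrightarrow> k < length bs \<longrightarrow>
           v \<in> bs ! i \<longrightarrow> v \<in> bs ! k \<longrightarrow> v \<in> bs ! j)"
  using assms unfolding path_decomp_def
  by (rule conjunct1, rule conjunct1[OF conjunct2], rule conjunct2[OF conjunct2])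

lemma pd_interval:
  assumes "path_decomp V E bs" "v \<in> V" "i \<le> j" "j \<le> k" "k < length bs" "v \<in> bs ! i" "v \<in> bs ! k"
  shows "v \<in> bs ! j"
proof -
  have "\<forall>i j k. i \<le> j \<longrightarrow> j \<le> k \<longrightarrow> k < length bs \<longrightarrow>
           v \<in> bs ! i \<longrightarrow> v \<in> bs ! k \<longrightarrow> v \<in> bs ! j"
    using bspec[OF pd_parts(3)[OF assms(1)] assms(2)] by (rule conjunct2)
  from this[rule_format, OF assms(3-7)] show ?thesis .
qed

lemma pd_edges: "path_decomp V E bs \<Longrightarrow> e \<in> E \<Longrightarrow> \<exists>B\<in>set bs. e \<subseteq> B"
  using pd_parts(2) by (rule bspec)

lemma pd_verts: "path_decomp V E bs \<Longrightarrow> v \<in> V \<Longrightarrow> \<exists>B\<in>set bs. v \<in> B"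
  using pd_parts(3) by (metis (no_types, lifting))

lemma pd_bags: "path_decomp V E bs \<Longrightarrow> B \<in> set bs \<Longrightarrow> B \<subseteq> V"
  using pd_parts(1) by (rule bspec)

lemma pd_intro:
  assumes "\<And>B. B \<in> set bs \<Longrightarrow> B \<subseteq> V" "\<And>e. e \<in> E \<Longrightarrow> \<exists>B\<in>set bs. e \<subseteq> B"
    "\<And>v. v \<in> V \<Longrightarrow> \<exists>B\<in>set bs. v \<in> B"
    "\<And>v i j k. v \<in> V \<Longrightarrow> i \<le> j \<Longrightarrow> j \<le> k \<Longrightarrow> k < length bs \<Longrightarrow> v \<in> bs ! i \<Longrightarrow> v \<in> bs ! k \<Longrightarrow> v \<in> bs ! j"
  shows "path_decomp V E bs"
  unfolding path_decomp_def
proof (intro conjI ballI allI impI)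
  fix B assume "B \<in> set bs" thus "B \<subseteq> V" by (rule assms(1))
next
  fix e assume "e \<in> E" thus "\<exists>B\<in>set bs. e \<subseteq> B" by (rule assms(2))
next
  fix v assume "v \<in> V" thus "\<exists>B\<in>set bs. v \<in> B" by (rule assms(3))
next
  fix v i j k assume "v \<in> V" "i \<le> j" "j \<le> k" "k < length bs" "v \<in> bs ! i" "v \<in> bs ! k"
  thus "v \<in> bs ! j" by (rule assms(4))
qed

lemma pd_mono_E: "path_decomp V E' bs \<Longrightarrow> E \<subseteq> E' \<Longrightarrow> path_decomp V E bs"
proof -
  assume a: "path_decomp V E' bs" "E \<subseteq> E'"
  show ?thesis
  proof (rule pd_intro)
    fix B assume "B \<in> set bs" thus "B \<subseteq> V" by (rule pd_bags[OF a(1)])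
  next
    fix e assume "e \<in> E" hence "e \<in> E'" using a(2) by blast
    thus "\<exists>B\<in>set bs. e \<subseteq> B" by (rule pd_edges[OF a(1)])
  next
    fix v assume "v \<in> V" thus "\<exists>B\<in>set bs. v \<in> B" by (rule pd_verts[OF a(1)])
  next
    fix v i j k assume "v \<in> V" "i \<le> j" "j \<le> k" "k < length bs" "v \<in> bs ! i" "v \<in> bs ! k"
    thus "v \<in> bs ! j" by (rule pd_interval[OF a(1)])
  qed
qed

lemma pd_restrict:
  assumes p: "path_decomp V E bs" and X: "X \<subseteq> V"
  shows "path_decomp X {e\<in>E. e \<subseteq> X} (map (\<lambda>B. B \<inter> X) bs)"
proof (rule pd_intro)
  fix B assume "B \<in> set (map (\<lambda>B. B \<inter> X) bs)" thus "B \<subseteq> X" by auto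
next
  fix e assume e: "e \<in> {e\<in>E. e \<subseteq> X}"
  then obtain B where "B \<in> set bs" "e \<subseteq> B" using pd_edges[OF p] by blast
  thus "\<exists>B\<in>set (map (\<lambda>B. B \<inter> X) bs). e \<subseteq> B" using e by auto
next
  fix v assume v: "v \<in> X"
  then obtain B where "B \<in> set bs" "v \<in> B" using pd_verts[OF p] X by blast
  thus "\<exists>B\<in>set (map (\<lambda>B. B \<inter> X) bs). v \<in> B" using v by auto
next
  fix v i j k assume v: "v \<in> X" and ijk: "i \<le> j" "j \<le> k" "k < length (map (\<lambda>B. B \<inter> X) bs)"
    "v \<in> map (\<lambda>B. B \<inter> X) bs ! i" "v \<in> map (\<lambda>B. B \<inter> X) bs ! k"
  have kl: "k < length bs" using ijk by simp
  have "v \<in> bs ! i" "v \<in> bs ! k" using ijk kl by auto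
  hence "v \<in> bs ! j" using pd_interval[OF p _ ijk(1,2) kl] v X by blast
  thus "v \<in> map (\<lambda>B. B \<inter> X) bs ! j" using ijk kl v by auto
qed

lemma ins_nth:
  assumes "i < length bs" "j < length bs + length cs"
  shows "(take (Suc i) bs @ map (\<lambda>C. bs!i \<union> C) cs @ drop (Suc i) bs) ! j =
    (if j \<le> i then bs ! j else if j < Suc i + length cs then bs ! i \<union> cs ! (j - Suc i)
     else bs ! (j - length cs))"
proof -
  have lt: "length (take (Suc i) bs) = Suc i" using assms(1) by simp
  show ?thesis
  proof (cases "j \<le> i")
    case True thus ?thesis using lt by (simp add: nth_append)
  next
    case False
    note F = False
    show ?thesis
    proof (cases "j < Suc i + length cs")
      case True
      hence "j - Suc i < length cs" using F by simp
      thus ?thesis using lt F True by (simp add: nth_append)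
    next
      case False
      have "(take (Suc i) bs @ map (\<lambda>C. bs!i \<union> C) cs @ drop (Suc i) bs) ! j
          = drop (Suc i) bs ! (j - Suc i - length cs)"
      proof -
        have "\<not> j < Suc i" "\<not> j - Suc i < length cs" using F False by auto
        thus ?thesis using lt by (simp add: nth_append)
      qed
      also have "\<dots> = bs ! (Suc i + (j - Suc i - length cs))" using assms False by (subst nth_drop) auto
      also have "Suc i + (j - Suc i - length cs) = j - length cs" using False by simp
      finally show ?thesis using F False by simp
    qed
  qed
qed

lemma pd_insert:
  assumes p: "path_decomp W F bs" and i: "i < length bs" and s: "s \<in> bs ! i"
    and q: "path_decomp X G cs" and XW: "X \<inter> W \<subseteq> {s}"
  shows "path_decomp (W \<union> X) (F \<union> G) (take (Suc i) bs @ map (\<lambda>C. bs!i \<union> C) cs @ drop (Suc i) bs)"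
    (is "path_decomp _ _ ?L")
proof -
  have len: "length ?L = length bs + length cs" using i by simp
  have setL: "set ?L = set (take (Suc i) bs) \<union> (\<lambda>C. bs!i \<union> C) ` set cs \<union> set (drop (Suc i) bs)" by (simp add: Un_assoc)
  have setbs: "set bs \<subseteq> set ?L"
  proof -
    have "set bs = set (take (Suc i) bs) \<union> set (drop (Suc i) bs)" by (metis append_take_drop_id set_append)
    thus ?thesis unfolding setL by blast
  qed
  have bsW: "B \<subseteq> W" if "B \<in> set bs" for B using pd_bags[OF p that] .
  have csX: "C \<subseteq> X" if "C \<in> set cs" for C using pd_bags[OF q that] .
  have biW: "bs ! i \<subseteq> W" using bsW i by simp
  show ?thesis
  proof (rule pd_intro)
    fix B assume B: "B \<in> set ?L"
    hence "B \<in> set (take (Suc i) bs) \<or> B \<in> (\<lambda>C. bs!i \<union> C) ` set cs \<or> B \<in> set (drop (Suc i) bs)"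
      unfolding setL by blast
    thus "B \<subseteq> W \<union> X"
    proof (elim disjE)
      assume "B \<in> set (take (Suc i) bs)"
      hence "B \<in> set bs" using set_take_subset by (rule subsetD[rotated])
      thus ?thesis using bsW by (intro le_supI1)
    next
      assume "B \<in> (\<lambda>C. bs!i \<union> C) ` set cs"
      then obtain C where "C \<in> set cs" "B = bs!i \<union> C" by (rule imageE)
      thus ?thesis using biW csX by (simp add: sup.coboundedI1 sup.coboundedI2 Un_mono)
    next
      assume "B \<in> set (drop (Suc i) bs)"
      hence "B \<in> set bs" using set_drop_subset by (rule subsetD[rotated])
      thus ?thesis using bsW by (intro le_supI1)
    qed
  next
    fix e assume "e \<in> F \<union> G"
    thus "\<exists>B\<in>set ?L. e \<subseteq> B"
    proof
      assume "e \<in> F"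
      then obtain B where "B \<in> set bs" "e \<subseteq> B" using pd_edges[OF p] by blast
      thus ?thesis using setbs by blast
    next
      assume "e \<in> G"
      then obtain C where C: "C \<in> set cs" "e \<subseteq> C" using pd_edges[OF q] by blast
      hence "bs ! i \<union> C \<in> set ?L" unfolding setL by blast
      thus ?thesis using C by blast
    qed
  next
    fix v assume "v \<in> W \<union> X"
    thus "\<exists>B\<in>set ?L. v \<in> B"
    proof
      assume "v \<in> W"
      then obtain B where "B \<in> set bs" "v \<in> B" using pd_verts[OF p] by blast
      thus ?thesis using setbs by blast
    next
      assume "v \<in> X"
      then obtain C where C: "C \<in> set cs" "v \<in> C" using pd_verts[OF q] by blast
      hence "bs ! i \<union> C \<in> set ?L" unfolding setL by blast
      thus ?thesis using C by blast
    qed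
  next
    fix v a j k assume v: "v \<in> W \<union> X" and ajk: "a \<le> j" "j \<le> k" "k < length ?L" "v \<in> ?L ! a" "v \<in> ?L ! k"
    have kl: "k < length bs + length cs" using ajk(3) len by simp
    have al: "a < length bs + length cs" "j < length bs + length cs" using kl ajk(1,2) by linarith+
    show "v \<in> ?L ! j"
    proof (cases "v \<in> W")
      case True
      define f where "f j = (if j \<le> i then j else if j < Suc i + length cs then i else j - length cs)" for j
      have fl: "f j < length bs" if "j < length bs + length cs" for j using that i unfolding f_def by auto
      have fm: "f j1 \<le> f j2" if "j1 \<le> j2" for j1 j2 using that unfolding f_def by auto
      have Ceq: "v \<in> bs ! i \<union> C \<longleftrightarrow> v \<in> bs ! i" if "C \<in> set cs" for C
        using csX[OF that] XW True s by blast
      have mem: "v \<in> ?L ! j \<longleftrightarrow> v \<in> bs ! f j" if jl: "j < length bs + length cs" for j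
      proof (cases "j \<le> i")
        case True thus ?thesis using ins_nth[OF i jl] unfolding f_def by simp
      next
        case F: False
        show ?thesis
        proof (cases "j < Suc i + length cs")
          case True
          hence "j - Suc i < length cs" using F by simp
          hence "cs ! (j - Suc i) \<in> set cs" by (rule nth_mem)
          thus ?thesis using ins_nth[OF i jl] F True Ceq unfolding f_def by simp
        next
          case False thus ?thesis using ins_nth[OF i jl] F unfolding f_def by simp
        qed
      qed
      have "v \<in> bs ! f a" "v \<in> bs ! f k" using mem[OF al(1)] mem[OF kl] ajk by blast+
      hence "v \<in> bs ! f j" using pd_interval[OF p True fm[OF ajk(1)] fm[OF ajk(2)] fl[OF kl]] by blast
      thus ?thesis using mem[OF al(2)] by blast
    next
      case False
      hence vX: "v \<in> X" using v by blast
      have notbs: "v \<notin> bs ! m" if "m < length bs" for m using bsW[OF nth_mem[OF that]] False by blast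
      have mem: "v \<in> ?L ! j \<longleftrightarrow> (Suc i \<le> j \<and> j < Suc i + length cs \<and> v \<in> cs ! (j - Suc i))"
        if jl: "j < length bs + length cs" for j
      proof (cases "j \<le> i")
        case True thus ?thesis using ins_nth[OF i jl] notbs[of j] i by simp
      next
        case F: False
        show ?thesis
        proof (cases "j < Suc i + length cs")
          case True thus ?thesis using ins_nth[OF i jl] F notbs[OF i] by simp
        next
          case False
          have "j - length cs < length bs" using jl False by linarith
          thus ?thesis using ins_nth[OF i jl] F False notbs by simp
        qed
      qed
      have a1: "Suc i \<le> a" "a < Suc i + length cs" "v \<in> cs ! (a - Suc i)" using mem[OF al(1)] ajk by blast+
      have k1: "Suc i \<le> k" "k < Suc i + length cs" "v \<in> cs ! (k - Suc i)" using mem[OF kl] ajk by blast+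
      have "a - Suc i \<le> j - Suc i" "j - Suc i \<le> k - Suc i" "k - Suc i < length cs"
        using ajk(1,2) k1(1,2) by linarith+
      hence "v \<in> cs ! (j - Suc i)" using pd_interval[OF q vX] a1(3) k1(3) by blast
      moreover have "Suc i \<le> j" "j < Suc i + length cs" using a1 k1 ajk by linarith+
      ultimately show ?thesis using mem[OF al(2)] by blast
    qed
  qed
qed

lemma pw_witness:
  assumes g: "graph V E"
  shows "\<exists>bs. path_decomp V E bs \<and> (\<forall>B\<in>set bs. card B \<le> pathwidth V E + 1)"
proof -
  have "path_decomp V E [V]"
  proof (rule pd_intro)
    fix B assume "B \<in> set [V]" thus "B \<subseteq> V" by simp
  next
    fix e assume "e \<in> E" thus "\<exists>B\<in>set [V]. e \<subseteq> B" using g by (simp add: graph_def)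
  next
    fix v assume "v \<in> V" thus "\<exists>B\<in>set [V]. v \<in> B" by simp
  next
    fix v i j k assume "i \<le> j" "j \<le> k" "k < length [V]" "v \<in> [V] ! i"
    thus "v \<in> [V] ! j" by simp
  qed
  hence "\<exists>bs. path_decomp V E bs \<and> (\<forall>B\<in>set bs. card B \<le> card V + 1)" by (intro exI[of _ "[V]"]) simp
  hence "\<exists>k bs. path_decomp V E bs \<and> (\<forall>B\<in>set bs. card B \<le> k + 1)" by blast
  thus ?thesis unfolding pathwidth_def by (rule LeastI_ex)
qed

lemma pw_le:
  assumes "path_decomp V E bs" "\<forall>B\<in>set bs. card B \<le> k + 1"
  shows "pathwidth V E \<le> k"
  unfolding pathwidth_def using assms by (intro Least_le) blast

theorem lemma7:
  fixes V V1 V2 :: "'a set" and E E1 E2 :: "'a set set"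
  assumes "tree V E"
    and "subtree V1 E1 V E" and "subtree V2 E2 V E"
    and "V = V1 \<union> V2" and "E = E1 \<union> E2"
  shows "pathwidth V E + 1 \<le> (pathwidth V1 E1 + 1) + (pathwidth V2 E2 + 1)"
proof -
  note t = assms(1)
  have g1: "graph V1 E1" and c1: "connected_graph V1 E1" and s1: "V1 \<subseteq> V" "E1 \<subseteq> E"
    using assms(2) unfolding subtree_def subgraph_def by blast+
  have g2: "graph V2 E2" and s2: "V2 \<subseteq> V" "E2 \<subseteq> E"
    using assms(3) unfolding subtree_def subgraph_def by blast+
  have fin1: "finite V1" using g1 by (simp add: graph_def)
  have fin2: "finite V2" using g2 by (simp add: graph_def)
  obtain att where att1: "\<forall>r\<in>V-V1. att r \<in> V1"
    and att2: "\<forall>r y. {r,y} \<in> E \<longrightarrow> r \<in> V - V1 \<longrightarrow> y \<in> V1 \<longrightarrow> att r = y"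
    and att3: "\<forall>r y. {r,y} \<in> E \<longrightarrow> r \<in> V - V1 \<longrightarrow> y \<in> V - V1 \<longrightarrow> att r = att y"
    using attach_exists[OF t c1 s1] by blast
  define p1 where "p1 = pathwidth V1 E1"
  define p2 where "p2 = pathwidth V2 E2"
  obtain bs1 where bs1: "path_decomp V1 E1 bs1" "\<forall>B\<in>set bs1. card B \<le> p1 + 1"
    using pw_witness[OF g1] unfolding p1_def by blast
  obtain bs2 where bs2: "path_decomp V2 E2 bs2" "\<forall>B\<in>set bs2. card B \<le> p2 + 1"
    using pw_witness[OF g2] unfolding p2_def by blast
  define X where "X s = ({r \<in> V - V1. att r = s} \<union> {s}) \<inter> V2" for s
  define G where "G s = {e\<in>E2. e \<subseteq> X s}" for s
  have XV2: "X s \<subseteq> V2" for s unfolding X_def by blast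
  have claim: "\<exists>bs. path_decomp (V1 \<union> \<Union>(X ` S)) (E1 \<union> \<Union>(G ` S)) bs \<and>
      (\<forall>B\<in>set bs. card B \<le> p1 + p2 + 2) \<and> (\<forall>s\<in>V1. \<exists>B\<in>set bs. s \<in> B \<and> card B \<le> p1 + 1)"
    if "finite S" "S \<subseteq> V1" for S
    using that
  proof (induction S rule: finite_subset_induct')
    case empty
    have "\<forall>s\<in>V1. \<exists>B\<in>set bs1. s \<in> B \<and> card B \<le> p1 + 1"
    proof
      fix s assume "s \<in> V1"
      then obtain B where "B \<in> set bs1" "s \<in> B" using pd_verts[OF bs1(1)] by blast
      thus "\<exists>B\<in>set bs1. s \<in> B \<and> card B \<le> p1 + 1" using bs1(2) by blast
    qed
    moreover have "\<forall>B\<in>set bs1. card B \<le> p1 + p2 + 2" using bs1(2) by fastforce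
    ultimately show ?case using bs1(1) by (intro exI[of _ bs1]) simp
  next
    case (insert a S)
    obtain bs where bs: "path_decomp (V1 \<union> \<Union>(X ` S)) (E1 \<union> \<Union>(G ` S)) bs"
      "\<forall>B\<in>set bs. card B \<le> p1 + p2 + 2" "\<forall>s\<in>V1. \<exists>B\<in>set bs. s \<in> B \<and> card B \<le> p1 + 1"
      using insert.IH by blast
    obtain B where B: "B \<in> set bs" "a \<in> B" "card B \<le> p1 + 1" using bs(3) insert.hyps(2) by blast
    obtain i where i: "i < length bs" "bs ! i = B" using B(1) by (auto simp: in_set_conv_nth)
    define cs where "cs = map (\<lambda>C. C \<inter> X a) bs2"
    have q: "path_decomp (X a) (G a) cs" unfolding cs_def G_def by (rule pd_restrict[OF bs2(1) XV2])
    have XW: "X a \<inter> (V1 \<union> \<Union>(X ` S)) \<subseteq> {a}"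
    proof
      fix z assume z: "z \<in> X a \<inter> (V1 \<union> \<Union>(X ` S))"
      show "z \<in> {a}"
      proof (rule ccontr)
        assume za: "z \<notin> {a}"
        hence zR: "z \<in> V - V1" "att z = a" using z unfolding X_def by auto
        then obtain t where tS: "t \<in> S" "z \<in> X t" using z by blast
        have "t \<in> V1" using tS insert.hyps(3) by blast
        hence "att z = t" using tS(2) zR unfolding X_def by auto
        thus False using zR tS insert.hyps by simp
      qed
    qed
    define L where "L = take (Suc i) bs @ map (\<lambda>C. bs!i \<union> C) cs @ drop (Suc i) bs"
    have pL: "path_decomp ((V1 \<union> \<Union>(X ` S)) \<union> X a) ((E1 \<union> \<Union>(G ` S)) \<union> G a) L"
      unfolding L_def by (rule pd_insert[OF bs(1) i(1) _ q XW]) (use B i in simp)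
    have eqV: "(V1 \<union> \<Union>(X ` S)) \<union> X a = V1 \<union> \<Union>(X ` insert a S)" by auto
    have eqE: "(E1 \<union> \<Union>(G ` S)) \<union> G a = E1 \<union> \<Union>(G ` insert a S)" by auto
    have setbs: "set bs \<subseteq> set L"
    proof -
      have "set bs = set (take (Suc i) bs) \<union> set (drop (Suc i) bs)" by (metis append_take_drop_id set_append)
      thus ?thesis unfolding L_def by auto
    qed
    have cardL: "\<forall>B'\<in>set L. card B' \<le> p1 + p2 + 2"
    proof
      fix B' assume B': "B' \<in> set L"
      hence "B' \<in> set (take (Suc i) bs) \<or> B' \<in> set (drop (Suc i) bs) \<or> B' \<in> (\<lambda>C. bs!i \<union> C) ` set cs"
        unfolding L_def by auto
      thus "card B' \<le> p1 + p2 + 2"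
      proof (elim disjE)
        assume "B' \<in> set (take (Suc i) bs)"
        hence "B' \<in> set bs" using set_take_subset by (rule subsetD[rotated])
        thus ?thesis using bs(2) by blast
      next
        assume "B' \<in> set (drop (Suc i) bs)"
        hence "B' \<in> set bs" using set_drop_subset by (rule subsetD[rotated])
        thus ?thesis using bs(2) by blast
      next
        assume "B' \<in> (\<lambda>C. bs!i \<union> C) ` set cs"
        then obtain C where C: "C \<in> set bs2" "B' = B \<union> (C \<inter> X a)" unfolding cs_def using i by auto
        have "finite C" using pd_bags[OF bs2(1) C(1)] fin2 finite_subset by blast
        hence "card (C \<inter> X a) \<le> card C" by (intro card_mono) auto
        moreover have "card C \<le> p2 + 1" using bs2(2) C(1) by blast
        moreover have "card B' \<le> card B + card (C \<inter> X a)" unfolding C(2) by (rule card_Un_le)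
        ultimately show ?thesis using B(3) by linarith
      qed
    qed
    have "\<forall>s\<in>V1. \<exists>B\<in>set L. s \<in> B \<and> card B \<le> p1 + 1" using bs(3) setbs by blast
    thus ?case using pL cardL unfolding eqV eqE by blast
  qed
  obtain bs where bs: "path_decomp (V1 \<union> \<Union>(X ` V1)) (E1 \<union> \<Union>(G ` V1)) bs"
      "\<forall>B\<in>set bs. card B \<le> p1 + p2 + 2"
    using claim[OF fin1 order_refl] by blast
  have eqV: "V1 \<union> \<Union>(X ` V1) = V"
  proof
    show "V1 \<union> \<Union>(X ` V1) \<subseteq> V" using s1 s2 XV2 by blast
  next
    show "V \<subseteq> V1 \<union> \<Union>(X ` V1)"
    proof
      fix v assume v: "v \<in> V"
      show "v \<in> V1 \<union> \<Union>(X ` V1)"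
      proof (cases "v \<in> V1")
        case False
        hence "v \<in> X (att v)" "att v \<in> V1" using v att1 assms(4) unfolding X_def by auto
        thus ?thesis by blast
      qed simp
    qed
  qed
  have H: "{r,y} \<in> \<Union>(G ` V1)" if e: "{r,y} \<in> E2" and r: "r \<in> V2 - V1" and y: "y \<in> V2" for r y
  proof -
    have eE: "{r,y} \<in> E" using e assms(5) by blast
    have rR: "r \<in> V - V1" using r s2 by blast
    show ?thesis
    proof (cases "y \<in> V1")
      case True
      hence "att r = y" using att2 eE rR by blast
      hence "{r,y} \<subseteq> X y" unfolding X_def using rR r y by auto
      hence "{r,y} \<in> G y" unfolding G_def using e by blast
      thus ?thesis using True by blast
    next
      case False
      hence yR: "y \<in> V - V1" using y s2 by blast
      hence "att r = att y" using att3 eE rR by blast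
      hence "{r,y} \<subseteq> X (att r)" unfolding X_def using rR yR r y by auto
      hence "{r,y} \<in> G (att r)" unfolding G_def using e by blast
      moreover have "att r \<in> V1" using att1 rR by blast
      ultimately show ?thesis by blast
    qed
  qed
  have eqE: "E \<subseteq> E1 \<union> \<Union>(G ` V1)"
  proof
    fix e assume e: "e \<in> E"
    show "e \<in> E1 \<union> \<Union>(G ` V1)"
    proof (cases "e \<in> E1")
      case False
      hence e2: "e \<in> E2" using e assms(5) by blast
      show ?thesis
      proof (cases "e \<subseteq> V1")
        case True
        thus ?thesis using tree_edge_in[OF t c1 s1 e] by blast
      next
        case nV: False
        obtain u v where uv: "e = {u,v}" "u \<in> V2" "v \<in> V2" using card2_E[OF g2 e2] by blast
        show ?thesis
        proof (cases "u \<in> V1")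
          case True
          hence "v \<notin> V1" using nV uv by blast
          moreover have "{v,u} \<in> E2" using e2 uv by (simp add: insert_commute)
          ultimately have "{v,u} \<in> \<Union>(G ` V1)" using H uv by blast
          thus ?thesis using uv by (simp add: insert_commute)
        next
          case False
          thus ?thesis using H[of u v] e2 uv by blast
        qed
      qed
    qed simp
  qed
  have "path_decomp V E bs" using pd_mono_E[OF bs(1) eqE] unfolding eqV .
  hence "pathwidth V E \<le> p1 + p2 + 1" using bs(2) by (intro pw_le) auto
  thus ?thesis unfolding p1_def p2_def by simp
qed

end
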